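(* Let $\mathfrak{k}$ be a field, $n\ge 2$, $r_1,\dots,r_n$ positive integers, ${\bf B}=\{(i_1,\dots,i_n):1\le i_j\le r_j\}$, and ${\mathcal A}=(x_{i_1\ldots i_n})_{(i_1,\ldots,i_n)\in{\bf B}}$ a box-shaped matrix of distinct indeterminates, with polynomial ring $\mathfrak{k}[{\mathcal A}]$. For $l=1,\dots,n$ let ${\mathcal A}_l=(x_{i_1\ldots i_n})_{(i_1,\ldots,i_n)\in{\bf B},\ i_l<r_l}$, ${\bf B}_l=\{(i_1,\dots,i_n)\in{\bf B}: i_l=r_l\}$, and $I_l=I_2({\mathcal A}_l)\mathfrak{k}[{\mathcal A}]+(x_{i_1\ldots i_n}:(i_1,\dots,i_n)\in{\bf B}_l)$. Then: (a) for any $l\neq s$ in $\{1,\dots,n\}$, $I_l\cap I_s=I_2({\mathcal A})+(x_{i_1\ldots i_n}:(i_1,\dots,i_n)\in{\bf B}_l\cap{\bf B}_s)$; (b) for any distinct $l_1,\dots,l_t\in\{1,\dots,n\}$ with $2\le t\le n$, $\bigcap_{j=1}^t I_{l_j}=I_2({\mathcal A})+(x_{i_1\ldots i_n}:(i_1,\dots,i_n)\in\bigcap_{j=1}^t{\bf B}_{l_j})$.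
   Context: $\mathfrak{k}$ is algebraically closed of characteristic $0$. For a box-shaped matrix $(a_{i_1\ldots i_n})$ indexed by a box of integral points, a $2\times2$ minor about the $l$-th coordinate is $a_{i_1\ldots i_l\ldots i_n}a_{j_1\ldots j_l\ldots j_n}-a_{i_1\ldots i_{l-1}j_li_{l+1}\ldots i_n}a_{j_1\ldots j_{l-1}i_lj_{l+1}\ldots j_n}$ for two index points; the ideal of $2\times2$ minors $I_2(\cdot)$ is generated by the $2\times 2$ minors about all coordinates. *)

theory Defs
  imports Main "HOL-Library.Poly_Mapping"
begin

definition box :: "nat \<Rightarrow> (nat \<Rightarrow> nat) \<Rightarrow> (nat \<Rightarrow> nat) set" where
  "box n r = {p. (\<forall>j. 1 \<le> j \<and> j \<le> n \<longrightarrow> 1 \<le> p j \<and> p j \<le> r j)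
               \<and> (\<forall>j. \<not> (1 \<le> j \<and> j \<le> n) \<longrightarrow> p j = 0)}"

text \<open>Multivariate polynomials over 'k in indeterminates indexed by index points.\<close>
type_synonym 'k mpoly = "((nat \<Rightarrow> nat) \<Rightarrow>\<^sub>0 nat) \<Rightarrow>\<^sub>0 'k"

definition X :: "(nat \<Rightarrow> nat) \<Rightarrow> 'k::comm_ring_1 mpoly" where
  "X p = Poly_Mapping.single (Poly_Mapping.single p 1) 1"

definition polyring :: "(nat \<Rightarrow> nat) set \<Rightarrow> 'k::comm_ring_1 mpoly set" where
  "polyring P = {f. \<forall>m \<in> Poly_Mapping.keys f. Poly_Mapping.keys m \<subseteq> P}"

definition ideal_in :: "'a::comm_ring_1 set \<Rightarrow> 'a set \<Rightarrow> 'a set" where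
  "ideal_in R S = {(\<Sum>g\<in>F. c g * g) | F c. finite F \<and> F \<subseteq> S \<and> (\<forall>g\<in>F. c g \<in> R)}"

definition minor2 :: "nat \<Rightarrow> (nat \<Rightarrow> nat) \<Rightarrow> (nat \<Rightarrow> nat) \<Rightarrow> 'k::comm_ring_1 mpoly" where
  "minor2 l p q = X p * X q - X (p(l := q l)) * X (q(l := p l))"

definition minors2 :: "nat \<Rightarrow> (nat \<Rightarrow> nat) set \<Rightarrow> 'k::comm_ring_1 mpoly set" where
  "minors2 n P = {minor2 l p q | l p q. 1 \<le> l \<and> l \<le> n \<and> p \<in> P \<and> q \<in> P}"

definition boxA :: "nat \<Rightarrow> (nat \<Rightarrow> nat) \<Rightarrow> nat \<Rightarrow> (nat \<Rightarrow> nat) set" where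
  "boxA n r l = {p \<in> box n r. p l < r l}"

definition boxB :: "nat \<Rightarrow> (nat \<Rightarrow> nat) \<Rightarrow> nat \<Rightarrow> (nat \<Rightarrow> nat) set" where
  "boxB n r l = {p \<in> box n r. p l = r l}"

definition Iface :: "nat \<Rightarrow> (nat \<Rightarrow> nat) \<Rightarrow> nat \<Rightarrow> 'k::comm_ring_1 mpoly set" where
  "Iface n r l = ideal_in (polyring (box n r)) (minors2 n (boxA n r l) \<union> X ` boxB n r l)"

end

theory Submission
  imports Defs
begin

definition subring :: "'a::comm_ring_1 set \<Rightarrow> bool" where
  "subring R \<longleftrightarrow> 0 \<in> R \<and> 1 \<in> R \<and> (\<forall>a\<in>R. \<forall>b\<in>R. a + b \<in> R \<and> a * b \<in> R) \<and> (\<forall>a\<in>R. - a \<in> R)"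

lemma ideal_in_0: "0 \<in> ideal_in R S"
  unfolding ideal_in_def by (rule CollectI, rule exI[of _ "{}"], auto)

lemma ideal_in_add:
  assumes R: "subring R" and f: "f \<in> ideal_in R S" and h: "h \<in> ideal_in R S"
  shows "f + h \<in> ideal_in R S"
proof -
  from f obtain F1 c1 where F1: "f = (\<Sum>g\<in>F1. c1 g * g)" "finite F1" "F1 \<subseteq> S" "\<forall>g\<in>F1. c1 g \<in> R"
    unfolding ideal_in_def by blast
  from h obtain F2 c2 where F2: "h = (\<Sum>g\<in>F2. c2 g * g)" "finite F2" "F2 \<subseteq> S" "\<forall>g\<in>F2. c2 g \<in> R"
    unfolding ideal_in_def by blast
  define c where "c g = (if g \<in> F1 then c1 g else 0) + (if g \<in> F2 then c2 g else 0)" for g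
  have e1: "(\<Sum>g\<in>F1 \<union> F2. (if g \<in> F1 then c1 g else 0) * g) = (\<Sum>g\<in>F1. c1 g * g)"
    by (rule sum.mono_neutral_cong_right) (use F1 F2 in auto)
  have e2: "(\<Sum>g\<in>F1 \<union> F2. (if g \<in> F2 then c2 g else 0) * g) = (\<Sum>g\<in>F2. c2 g * g)"
    by (rule sum.mono_neutral_cong_right) (use F1 F2 in auto)
  have "f + h = (\<Sum>g\<in>F1 \<union> F2. c g * g)"
    unfolding c_def distrib_right sum.distrib e1 e2 F1(1) F2(1) ..
  moreover have "\<forall>g\<in>F1 \<union> F2. c g \<in> R"
    using R F1 F2 unfolding c_def subring_def by auto
  ultimately show ?thesis unfolding ideal_in_def using F1 F2 by blast
qed

lemma ideal_in_mult:
  assumes R: "subring R" and a: "a \<in> R" and f: "f \<in> ideal_in R S"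
  shows "a * f \<in> ideal_in R S"
proof -
  from f obtain F1 c1 where F1: "f = (\<Sum>g\<in>F1. c1 g * g)" "finite F1" "F1 \<subseteq> S" "\<forall>g\<in>F1. c1 g \<in> R"
    unfolding ideal_in_def by blast
  have "a * f = (\<Sum>g\<in>F1. (a * c1 g) * g)"
    unfolding F1(1) sum_distrib_left by (simp add: mult.assoc)
  moreover have "\<forall>g\<in>F1. a * c1 g \<in> R" using R a F1 unfolding subring_def by auto
  ultimately show ?thesis unfolding ideal_in_def
    by (intro CollectI exI[of _ F1] exI[of _ "\<lambda>g. a * c1 g"]) (use F1 in auto)
qed

lemma ideal_in_neg:
  assumes R: "subring R" and f: "f \<in> ideal_in R S"
  shows "- f \<in> ideal_in R S"
proof -
  have "- 1 \<in> R" using R unfolding subring_def by auto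
  from ideal_in_mult[OF R this f] show ?thesis by simp
qed

lemma ideal_in_diff:
  assumes R: "subring R" and f: "f \<in> ideal_in R S" and h: "h \<in> ideal_in R S"
  shows "f - h \<in> ideal_in R S"
  using ideal_in_add[OF R f ideal_in_neg[OF R h]] by simp

lemma ideal_in_gen_mult:
  assumes a: "a \<in> R" and s: "s \<in> S"
  shows "a * s \<in> ideal_in R S"
  unfolding ideal_in_def
  by (rule CollectI, rule exI[of _ "{s}"], rule exI[of _ "\<lambda>_. a"]) (use a s in auto)

lemma ideal_in_gen:
  assumes R: "subring R" and s: "s \<in> S"
  shows "s \<in> ideal_in R S"
  using ideal_in_gen_mult[of 1 R s S] R s unfolding subring_def by auto

lemma ideal_in_sum:
  assumes R: "subring R" and "\<forall>i\<in>I. f i \<in> ideal_in R S"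
  shows "sum f I \<in> ideal_in R S"
  using assms(2)
proof (induction I rule: infinite_finite_induct)
  case (infinite A) then show ?case by (simp add: ideal_in_0)
next
  case empty then show ?case by (simp add: ideal_in_0)
next
  case (insert x F) then show ?case by (simp add: ideal_in_add[OF R])
qed

lemma ideal_in_mono:
  assumes R: "subring R" and sub: "S \<subseteq> ideal_in R T"
  shows "ideal_in R S \<subseteq> ideal_in R T"
proof
  fix f assume "f \<in> ideal_in R S"
  then obtain F1 c1 where F1: "f = (\<Sum>g\<in>F1. c1 g * g)" "finite F1" "F1 \<subseteq> S" "\<forall>g\<in>F1. c1 g \<in> R"
    unfolding ideal_in_def by blast
  show "f \<in> ideal_in R T" unfolding F1(1)
    by (rule ideal_in_sum[OF R]) (use F1 sub ideal_in_mult[OF R] in blast)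
qed

lemma ideal_in_mono_gen:
  assumes R: "subring R" and sub: "S \<subseteq> T"
  shows "ideal_in R S \<subseteq> ideal_in R T"
  by (rule ideal_in_mono[OF R]) (use sub ideal_in_gen[OF R] in blast)

lemma sum_in_subring:
  assumes R: "subring R" and "\<forall>i\<in>I. f i \<in> R"
  shows "sum f I \<in> R"
  using assms(2)
proof (induction I rule: infinite_finite_induct)
  case (infinite A) then show ?case using R by (simp add: subring_def)
next
  case empty then show ?case using R by (simp add: subring_def)
next
  case (insert x F) then show ?case using R by (simp add: subring_def)
qed

lemma ideal_in_subset:
  assumes R: "subring R" and S: "S \<subseteq> R"
  shows "ideal_in R S \<subseteq> R"
proof
  fix f assume "f \<in> ideal_in R S"
  then obtain F1 c1 where F1: "f = (\<Sum>g\<in>F1. c1 g * g)" "finite F1" "F1 \<subseteq> S" "\<forall>g\<in>F1. c1 g \<in> R"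
    unfolding ideal_in_def by blast
  show "f \<in> R" unfolding F1(1)
    by (rule sum_in_subring[OF R]) (use F1 S R in \<open>auto simp: subring_def\<close>)
qed

lemma subring_polyring: "subring (polyring P :: 'k::comm_ring_1 mpoly set)"
proof -
  have add: "a + b \<in> polyring P" if "a \<in> polyring P" "b \<in> polyring P" for a b :: "'k mpoly"
    using that keys_add[of a b] unfolding polyring_def by blast
  have mul: "a * b \<in> polyring P" if "a \<in> polyring P" "b \<in> polyring P" for a b :: "'k mpoly"
  proof -
    have "Poly_Mapping.keys m \<subseteq> P" if m: "m \<in> Poly_Mapping.keys (a * b)" for m
    proof -
      from m keys_mult[of a b] obtain x y where "m = x + y" "x \<in> Poly_Mapping.keys a" "y \<in> Poly_Mapping.keys b"
        by blast
      then show ?thesis using keys_add[of x y] \<open>a \<in> polyring P\<close> \<open>b \<in> polyring P\<close>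
        unfolding polyring_def by blast
    qed
    then show ?thesis unfolding polyring_def by blast
  qed
  have z: "0 \<in> polyring P" unfolding polyring_def by simp
  have o: "1 \<in> polyring P" unfolding polyring_def by simp
  have ng: "- a \<in> polyring P" if "a \<in> polyring P" for a :: "'k mpoly"
    using that unfolding polyring_def by simp
  show ?thesis unfolding subring_def using add mul z o ng by blast
qed

lemma single_in_polyring:
  "Poly_Mapping.keys m \<subseteq> P \<Longrightarrow> Poly_Mapping.single m a \<in> polyring P"
  unfolding polyring_def by auto

lemma const_in_polyring: "Poly_Mapping.single 0 a \<in> polyring P"
  by (rule single_in_polyring) simp

lemma X_in_polyring: "p \<in> P \<Longrightarrow> X p \<in> polyring P"
  unfolding X_def by (rule single_in_polyring) simp

lemma poly_expand:
  "f = (\<Sum>m\<in>Poly_Mapping.keys f. Poly_Mapping.single m (Poly_Mapping.lookup f m))"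
proof (rule poly_mapping_eqI)
  fix k
  show "Poly_Mapping.lookup f k = Poly_Mapping.lookup (\<Sum>m\<in>Poly_Mapping.keys f. Poly_Mapping.single m (Poly_Mapping.lookup f m)) k"
    unfolding lookup_sum lookup_single
    by (cases "k \<in> Poly_Mapping.keys f") (auto simp: when_def in_keys_iff)
qed

definition cnt :: "((nat \<Rightarrow> nat) \<Rightarrow>\<^sub>0 nat) \<Rightarrow> nat \<Rightarrow> nat \<Rightarrow> nat" where
  "cnt m j v = (\<Sum>p\<in>Poly_Mapping.keys m. if p j = v then Poly_Mapping.lookup m p else 0)"

lemma cnt_add [simp]: "cnt (a + b) j v = cnt a j v + cnt b j v"
  unfolding cnt_def
  by (rule setsum_keys_plus_distrib[where f = "\<lambda>p x. if p j = v then x else 0"]) auto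

lemma cnt_add_fun: "cnt (a + b) = (\<lambda>j v. cnt a j v + cnt b j v)"
  by (auto simp: fun_eq_iff)

lemma cnt_zero [simp]: "cnt 0 j v = 0"
  unfolding cnt_def by simp

lemma cnt_single [simp]: "cnt (Poly_Mapping.single p a) j v = (if p j = v then a else 0)"
  unfolding cnt_def by simp

lemma cnt_pos: "p \<in> Poly_Mapping.keys m \<Longrightarrow> cnt m j (p j) > 0"
proof -
  assume p: "p \<in> Poly_Mapping.keys m"
  have "(if p j = p j then Poly_Mapping.lookup m p else 0) \<le> cnt m j (p j)"
    unfolding cnt_def by (rule member_le_sum) (use p in auto)
  then show ?thesis using p by (simp add: in_keys_iff)
qed

lemma cnt_pos_obtain: assumes "cnt m j v > 0" obtains p where "p \<in> Poly_Mapping.keys m" "p j = v"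
proof -
  from assms have "cnt m j v \<noteq> 0" by simp
  then have "(\<Sum>p\<in>Poly_Mapping.keys m. if p j = v then Poly_Mapping.lookup m p else 0) \<noteq> 0"
    unfolding cnt_def .
  have "\<exists>p\<in>Poly_Mapping.keys m. (if p j = v then Poly_Mapping.lookup m p else 0) \<noteq> 0"
  proof (rule ccontr)
    assume "\<not> ?thesis"
    then have "\<forall>p\<in>Poly_Mapping.keys m. (if p j = v then Poly_Mapping.lookup m p else 0) = 0" by blast
    then have "(\<Sum>p\<in>Poly_Mapping.keys m. if p j = v then Poly_Mapping.lookup m p else 0) = 0"
      by (rule sum.neutral)
    with \<open>(\<Sum>p\<in>Poly_Mapping.keys m. if p j = v then Poly_Mapping.lookup m p else 0) \<noteq> 0\<close> show False
      by contradiction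
  qed
  then obtain p where "p \<in> Poly_Mapping.keys m" "(if p j = v then Poly_Mapping.lookup m p else 0) \<noteq> 0"
    by blast
  moreover then have "p j = v" by (cases "p j = v") auto
  ultimately show ?thesis using that by blast
qed

definition phi :: "(nat \<Rightarrow> nat \<Rightarrow> nat) \<Rightarrow> 'k::comm_ring_1 mpoly \<Rightarrow> 'k" where
  "phi c f = (\<Sum>m\<in>Poly_Mapping.keys f. if cnt m = c then Poly_Mapping.lookup f m else 0)"

lemma phi_add: "phi c (f + g) = phi c f + phi c g"
  unfolding phi_def
  by (rule setsum_keys_plus_distrib[where f = "\<lambda>m x. if cnt m = c then x else 0"]) auto

lemma phi_uminus: "phi c (- f) = - phi c f"
  unfolding phi_def by (simp add: sum_negf[symmetric] if_distrib cong: if_cong)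

lemma phi_diff: "phi c (f - g) = phi c f - phi c g"
  using phi_add[of c f "- g"] phi_uminus[of c g] by simp

lemma phi_sum: "phi c (sum f I) = (\<Sum>i\<in>I. phi c (f i))"
proof (induction I rule: infinite_finite_induct)
  case (infinite A) then show ?case by (simp add: phi_def)
next
  case empty then show ?case by (simp add: phi_def)
next
  case (insert x F) then show ?case by (simp add: phi_add)
qed

lemma phi_single: "phi c (Poly_Mapping.single m a) = (if cnt m = c then a else 0)"
  unfolding phi_def by auto

lemma phi_mult_mono:
  "phi c (g * Poly_Mapping.single M 1) =
     (\<Sum>m\<in>Poly_Mapping.keys g. if (\<lambda>j v. cnt m j v + cnt M j v) = c then Poly_Mapping.lookup g m else 0)"
proof -
  have "g * Poly_Mapping.single M 1 = (\<Sum>m\<in>Poly_Mapping.keys g. Poly_Mapping.single m (Poly_Mapping.lookup g m) * Poly_Mapping.single M 1)"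
    by (subst poly_expand[of g]) (simp add: sum_distrib_right)
  also have "\<dots> = (\<Sum>m\<in>Poly_Mapping.keys g. Poly_Mapping.single (m + M) (Poly_Mapping.lookup g m))"
    by (simp add: mult_single)
  finally show ?thesis by (simp add: phi_sum phi_single cnt_add_fun)
qed

lemma phi_mult_mono_eq:
  "cnt M1 = cnt M2 \<Longrightarrow> phi c (g * Poly_Mapping.single M1 1) = phi c (g * Poly_Mapping.single M2 1)"
  by (simp add: phi_mult_mono)

lemma cnt_minor:
  "cnt (Poly_Mapping.single p 1 + Poly_Mapping.single q 1) =
   cnt (Poly_Mapping.single (p(k := q k)) 1 + Poly_Mapping.single (q(k := p k)) 1)"
  by (auto simp: fun_eq_iff)

lemma minor2_eq: "minor2 k p q =
   Poly_Mapping.single (Poly_Mapping.single p 1 + Poly_Mapping.single q 1) 1 -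
   Poly_Mapping.single (Poly_Mapping.single (p(k := q k)) 1 + Poly_Mapping.single (q(k := p k)) 1) (1::'k::comm_ring_1)"
  unfolding minor2_def X_def by (simp add: mult_single)

lemma phi_minor: "phi c (g * minor2 k p q) = 0"
  unfolding minor2_eq right_diff_distrib phi_diff
  using phi_mult_mono_eq[OF cnt_minor] by simp

lemma phi_X:
  assumes "p l = v" "c l v = 0"
  shows "phi c (g * X p) = 0"
  unfolding X_def phi_mult_mono
proof (rule sum.neutral, intro ballI)
  fix m
  have "(\<lambda>j v. cnt m j v + cnt (Poly_Mapping.single p 1) j v) \<noteq> c"
  proof
    assume eq: "(\<lambda>j v. cnt m j v + cnt (Poly_Mapping.single p 1) j v) = c"
    have "cnt m l v + cnt (Poly_Mapping.single p 1) l v = c l v"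
      using fun_cong[OF fun_cong[OF eq, of l], of v] by simp
    then show False using assms by simp
  qed
  then show "(if (\<lambda>j v. cnt m j v + cnt (Poly_Mapping.single p 1) j v) = c then Poly_Mapping.lookup g m else 0) = 0"
    by simp
qed

lemma phi_ideal:
  assumes "\<And>g s. s \<in> S \<Longrightarrow> phi c (g * s) = 0" and "f \<in> ideal_in R S"
  shows "phi c f = 0"
proof -
  from assms(2) obtain F1 c1 where F1: "f = (\<Sum>g\<in>F1. c1 g * g)" "F1 \<subseteq> S"
    unfolding ideal_in_def by blast
  show ?thesis unfolding F1(1) phi_sum using assms(1) F1(2) by (simp add: subset_iff)
qed

definition Xm :: "((nat \<Rightarrow> nat) \<Rightarrow>\<^sub>0 nat) \<Rightarrow> 'k::comm_ring_1 mpoly" where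
  "Xm m = Poly_Mapping.single m 1"

definition I2 :: "nat \<Rightarrow> (nat \<Rightarrow> nat) \<Rightarrow> 'k::comm_ring_1 mpoly set" where
  "I2 n r = ideal_in (polyring (box n r)) (minors2 n (box n r))"

definition deg :: "((nat \<Rightarrow> nat) \<Rightarrow>\<^sub>0 nat) \<Rightarrow> nat" where
  "deg m = (\<Sum>k\<in>Poly_Mapping.keys m. Poly_Mapping.lookup m k)"

lemma deg_add: "deg (a + b) = deg a + deg b"
  unfolding deg_def
  by (rule setsum_keys_plus_distrib[where f = "\<lambda>k x. x"]) auto

lemma deg_single: "deg (Poly_Mapping.single p 1) = 1"
  unfolding deg_def by simp

lemma Xm_add: "Xm (a + b) = (Xm a * Xm b :: 'k::comm_ring_1 mpoly)"
  unfolding Xm_def by (simp add: mult_single)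

lemma Xm_in: "Poly_Mapping.keys m \<subseteq> P \<Longrightarrow> Xm m \<in> polyring P"
  unfolding Xm_def by (rule single_in_polyring)

lemma X_Xm: "X p = Xm (Poly_Mapping.single p 1)"
  unfolding X_def Xm_def ..

lemma box_upd: "p \<in> box n r \<Longrightarrow> q \<in> box n r \<Longrightarrow> 1 \<le> k \<Longrightarrow> k \<le> n \<Longrightarrow> p(k := q k) \<in> box n r"
  unfolding box_def by auto

lemma box_eq: "p \<in> box n r \<Longrightarrow> q \<in> box n r \<Longrightarrow> (\<forall>j. 1 \<le> j \<and> j \<le> n \<longrightarrow> q j = p j) \<Longrightarrow> q = p"
proof -
  assume a: "p \<in> box n r" "q \<in> box n r" "\<forall>j. 1 \<le> j \<and> j \<le> n \<longrightarrow> q j = p j"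
  show "q = p"
  proof
    fix x show "q x = p x" using a unfolding box_def by (cases "1 \<le> x \<and> x \<le> n") auto
  qed
qed

lemma keys_single_add:
  "Poly_Mapping.keys (Poly_Mapping.single p (1::nat) + m) = insert p (Poly_Mapping.keys m)"
  by (auto simp: in_keys_iff lookup_add lookup_single when_def split: if_splits)

lemma decompose1:
  assumes "p \<in> Poly_Mapping.keys (m :: (nat \<Rightarrow> nat) \<Rightarrow>\<^sub>0 nat)"
  shows "m = Poly_Mapping.single p 1 + (m - Poly_Mapping.single p 1)"
  by (rule poly_mapping_eqI) (use assms in \<open>auto simp: lookup_add lookup_minus lookup_single when_def in_keys_iff\<close>)

lemma keys_minus_nat: "Poly_Mapping.keys ((m :: 'a \<Rightarrow>\<^sub>0 nat) - a) \<subseteq> Poly_Mapping.keys m"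
  by (auto simp: in_keys_iff lookup_minus)

context
  fixes n :: nat and r :: "nat \<Rightarrow> nat"
begin

lemma subR: "subring (polyring (box n r) :: 'k::comm_ring_1 mpoly set)"
  by (rule subring_polyring)

lemma eqv_trans:
  "(Xm a - Xm b :: 'k::comm_ring_1 mpoly) \<in> I2 n r \<Longrightarrow> (Xm b - Xm c :: 'k mpoly) \<in> I2 n r \<Longrightarrow> (Xm a - Xm c :: 'k mpoly) \<in> I2 n r"
proof -
  assume "(Xm a - Xm b :: 'k::comm_ring_1 mpoly) \<in> I2 n r" "(Xm b - Xm c :: 'k mpoly) \<in> I2 n r"
  then have "(Xm a - Xm b) + (Xm b - Xm c :: 'k mpoly) \<in> I2 n r" unfolding I2_def by (rule ideal_in_add[OF subR])
  then show ?thesis by simp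
qed

lemma eqv_sym:
  "(Xm a - Xm b :: 'k::comm_ring_1 mpoly) \<in> I2 n r \<Longrightarrow> (Xm b - Xm a :: 'k mpoly) \<in> I2 n r"
proof -
  assume "(Xm a - Xm b :: 'k::comm_ring_1 mpoly) \<in> I2 n r"
  then have "- (Xm a - Xm b :: 'k mpoly) \<in> I2 n r" unfolding I2_def by (rule ideal_in_neg[OF subR])
  then show ?thesis by simp
qed

lemma eqv_cong:
  assumes "(Xm m - Xm m' :: 'k::comm_ring_1 mpoly) \<in> I2 n r" "Poly_Mapping.keys a \<subseteq> box n r"
  shows "(Xm (a + m) - Xm (a + m') :: 'k mpoly) \<in> I2 n r"
proof -
  have "(Xm (a + m) - Xm (a + m') :: 'k mpoly) = Xm a * (Xm m - Xm m')"
    by (simp add: Xm_add right_diff_distrib)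
  then show ?thesis using ideal_in_mult[OF subR Xm_in[OF assms(2)]] assms(1) unfolding I2_def by simp
qed

lemma eqv_swap:
  assumes "p \<in> box n r" "q \<in> box n r" "1 \<le> k" "k \<le> n"
  shows "(Xm (Poly_Mapping.single p 1 + Poly_Mapping.single q 1)
          - Xm (Poly_Mapping.single (p(k := q k)) 1 + Poly_Mapping.single (q(k := p k)) 1) :: 'k::comm_ring_1 mpoly)
         \<in> I2 n r"
proof -
  have "minor2 k p q \<in> (minors2 n (box n r) :: 'k mpoly set)"
    unfolding minors2_def using assms by blast
  then show ?thesis unfolding I2_def minor2_eq Xm_def by (rule ideal_in_gen[OF subR])
qed

lemma swap_step:
  assumes k1: "Poly_Mapping.keys m1 \<subseteq> box n r" and q: "q \<in> Poly_Mapping.keys m1"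
    and q': "q' \<in> Poly_Mapping.keys m1" and qq': "q \<noteq> q'" and jn: "1 \<le> j" "j \<le> n"
  shows "\<exists>m2. Poly_Mapping.keys m2 \<subseteq> box n r \<and> (Xm m1 - Xm m2 :: 'k::comm_ring_1 mpoly) \<in> I2 n r \<and>
           cnt m2 = cnt m1 \<and> q(j := q' j) \<in> Poly_Mapping.keys m2"
proof -
  define rest where "rest = m1 - Poly_Mapping.single q 1 - Poly_Mapping.single q' 1"
  have m1eq: "m1 = rest + (Poly_Mapping.single q 1 + Poly_Mapping.single q' 1)"
  proof (rule poly_mapping_eqI)
    fix k
    have "Poly_Mapping.lookup m1 q \<ge> 1" "Poly_Mapping.lookup m1 q' \<ge> 1"
      using q q' by (auto simp: in_keys_iff)
    then show "Poly_Mapping.lookup m1 k = Poly_Mapping.lookup (rest + (Poly_Mapping.single q 1 + Poly_Mapping.single q' 1)) k"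
      unfolding rest_def lookup_add lookup_minus lookup_single using qq'
      by (cases "k = q"; cases "k = q'") (auto simp: when_def)
  qed
  have krest: "Poly_Mapping.keys rest \<subseteq> box n r"
    using k1 keys_minus_nat[of "m1 - Poly_Mapping.single q 1" "Poly_Mapping.single q' 1"] keys_minus_nat[of m1 "Poly_Mapping.single q 1"] unfolding rest_def by blast
  have qb: "q \<in> box n r" "q' \<in> box n r" using k1 q q' by auto
  define s2 where "s2 = Poly_Mapping.single (q(j := q' j)) (1::nat) + Poly_Mapping.single (q'(j := q j)) 1"
  define m2 where "m2 = rest + s2"
  have "(Xm (rest + (Poly_Mapping.single q 1 + Poly_Mapping.single q' 1)) - Xm (rest + s2) :: 'k mpoly) \<in> I2 n r"
    unfolding s2_def by (rule eqv_cong[OF eqv_swap[OF qb jn] krest])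
  then have e: "(Xm m1 - Xm m2 :: 'k mpoly) \<in> I2 n r" unfolding m2_def using m1eq by simp
  have "cnt m1 = (\<lambda>a b. cnt rest a b + cnt (Poly_Mapping.single q 1 + Poly_Mapping.single q' 1) a b)"
    by (subst m1eq) (rule cnt_add_fun)
  also have "\<dots> = (\<lambda>a b. cnt rest a b + cnt s2 a b)" unfolding s2_def cnt_minor[of q q' j] ..
  also have "\<dots> = cnt m2" unfolding m2_def by (rule cnt_add_fun[symmetric])
  finally have c2: "cnt m2 = cnt m1" ..
  have "Poly_Mapping.keys s2 \<subseteq> {q(j := q' j), q'(j := q j)}"
    unfolding s2_def using keys_add[of "Poly_Mapping.single (q(j := q' j)) (1::nat)" "Poly_Mapping.single (q'(j := q j)) 1"]
    by (simp; blast)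
  then have "Poly_Mapping.keys m2 \<subseteq> Poly_Mapping.keys rest \<union> {q(j := q' j), q'(j := q j)}"
    unfolding m2_def using keys_add[of rest s2] by blast
  then have k2: "Poly_Mapping.keys m2 \<subseteq> box n r"
    using krest box_upd[OF qb jn] box_upd[OF qb(2,1) jn] by blast
  have "Poly_Mapping.lookup m2 (q(j := q' j)) \<noteq> 0"
    unfolding m2_def s2_def lookup_add by (simp add: lookup_single)
  then have q2: "q(j := q' j) \<in> Poly_Mapping.keys m2" by (simp add: in_keys_iff)
  show ?thesis using e c2 k2 q2 by blast
qed

lemma align:
  assumes m: "Poly_Mapping.keys m \<subseteq> box n r" "m \<noteq> 0" and p: "p \<in> box n r"
    and c: "\<forall>j. 1 \<le> j \<and> j \<le> n \<longrightarrow> cnt m j (p j) > 0"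
  shows "\<exists>m''. Poly_Mapping.keys m'' \<subseteq> box n r \<and>
          (Xm m - Xm (Poly_Mapping.single p 1 + m'') :: 'k::comm_ring_1 mpoly) \<in> I2 n r \<and>
          cnt (Poly_Mapping.single p 1 + m'') = cnt m"
proof -
  have claim: "\<exists>m1 q. Poly_Mapping.keys m1 \<subseteq> box n r \<and> (Xm m - Xm m1 :: 'k mpoly) \<in> I2 n r \<and>
          cnt m1 = cnt m \<and> q \<in> Poly_Mapping.keys m1 \<and> (\<forall>j. 1 \<le> j \<and> j \<le> k \<longrightarrow> q j = p j)"
    if "k \<le> n" for k
    using that
  proof (induction k)
    case 0
    from m(2) obtain q where q: "q \<in> Poly_Mapping.keys m" by fastforce
    have "(Xm m - Xm m :: 'k mpoly) \<in> I2 n r" unfolding I2_def using ideal_in_0 by simp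
    then show ?case using m(1) q by (intro exI[of _ m] exI[of _ q]) simp
  next
    case (Suc k)
    then have "k \<le> n" by simp
    from Suc.IH[OF this] obtain m1 q where IH: "Poly_Mapping.keys m1 \<subseteq> box n r" "(Xm m - Xm m1 :: 'k mpoly) \<in> I2 n r"
          "cnt m1 = cnt m" "q \<in> Poly_Mapping.keys m1" "\<forall>j. 1 \<le> j \<and> j \<le> k \<longrightarrow> q j = p j"
      by blast
    define j where "j = Suc k"
    have jn: "1 \<le> j" "j \<le> n" using Suc.prems unfolding j_def by auto
    show ?case
    proof (cases "q j = p j")
      case True
      have "\<forall>i. 1 \<le> i \<and> i \<le> Suc k \<longrightarrow> q i = p i"
        using IH(5) True unfolding j_def by (auto simp: le_Suc_eq)
      then show ?thesis using IH(1-4) by (intro exI[of _ m1] exI[of _ q]) simp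
    next
      case False
      have "cnt m1 j (p j) > 0" using c IH(3) jn by simp
      then obtain q' where q': "q' \<in> Poly_Mapping.keys m1" "q' j = p j" by (rule cnt_pos_obtain)
      have qq': "q \<noteq> q'" using False q' by auto
      from swap_step[OF IH(1,4) q'(1) qq' jn] obtain m2 where
        S: "Poly_Mapping.keys m2 \<subseteq> box n r" "(Xm m1 - Xm m2 :: 'k mpoly) \<in> I2 n r"
           "cnt m2 = cnt m1" "q(j := q' j) \<in> Poly_Mapping.keys m2"
        by blast
      have e: "(Xm m - Xm m2 :: 'k mpoly) \<in> I2 n r" by (rule eqv_trans[OF IH(2) S(2)])
      have c2: "cnt m2 = cnt m" using S(3) IH(3) by simp
      have ag: "\<forall>i. 1 \<le> i \<and> i \<le> Suc k \<longrightarrow> (q(j := q' j)) i = p i"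
        using IH(5) q'(2) unfolding j_def by (auto simp: le_Suc_eq)
      show ?thesis by (intro exI[of _ m2] exI[of _ "q(j := q' j)"] conjI) (rule S(1), rule e, rule c2, rule S(4), rule ag)
    qed
  qed
  from claim[OF order_refl] obtain m1 q where C: "Poly_Mapping.keys m1 \<subseteq> box n r" "(Xm m - Xm m1 :: 'k mpoly) \<in> I2 n r"
          "cnt m1 = cnt m" "q \<in> Poly_Mapping.keys m1" "\<forall>j. 1 \<le> j \<and> j \<le> n \<longrightarrow> q j = p j"
    by blast
  have "q \<in> box n r" using C(1,4) by blast
  then have "q = p" using box_eq[OF p _ C(5)] by simp
  from decompose1[OF C(4)] have e: "Poly_Mapping.single p 1 + (m1 - Poly_Mapping.single p 1) = m1"
    unfolding \<open>q = p\<close> by (rule sym)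
  have "Poly_Mapping.keys (m1 - Poly_Mapping.single p 1) \<subseteq> box n r"
    using C(1) keys_minus_nat[of m1 "Poly_Mapping.single p 1"] by blast
  moreover have "(Xm m - Xm (Poly_Mapping.single p 1 + (m1 - Poly_Mapping.single p 1)) :: 'k mpoly) \<in> I2 n r"
    unfolding e by (rule C(2))
  moreover have "cnt (Poly_Mapping.single p 1 + (m1 - Poly_Mapping.single p 1)) = cnt m"
    unfolding e by (rule C(3))
  ultimately show ?thesis by (intro exI[of _ "m1 - Poly_Mapping.single p 1"] conjI)
qed

end

context
  fixes n :: nat and r :: "nat \<Rightarrow> nat"
begin

lemma deg_zero: "deg m = 0 \<Longrightarrow> m = 0"
proof (rule ccontr)
  assume "deg m = 0" "m \<noteq> 0"
  then obtain p where p: "p \<in> Poly_Mapping.keys m" by fastforce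
  have "Poly_Mapping.lookup m p \<le> deg m" unfolding deg_def by (rule member_le_sum) (use p in auto)
  then show False using p \<open>deg m = 0\<close> by (simp add: in_keys_iff)
qed

lemma cnt_zero_imp: "cnt m = (\<lambda>j v. 0) \<Longrightarrow> m = 0"
proof (rule ccontr)
  assume "cnt m = (\<lambda>j v. 0)" "m \<noteq> 0"
  then obtain p where p: "p \<in> Poly_Mapping.keys m" by fastforce
  have "cnt m 0 (p 0) > 0" by (rule cnt_pos[OF p])
  then show False using \<open>cnt m = (\<lambda>j v. 0)\<close> by simp
qed

lemma connect:
  "deg m' = d \<Longrightarrow> Poly_Mapping.keys m \<subseteq> box n r \<Longrightarrow> Poly_Mapping.keys m' \<subseteq> box n r \<Longrightarrow>
   cnt m = cnt m' \<Longrightarrow> (Xm m - Xm m' :: 'k::comm_ring_1 mpoly) \<in> I2 n r"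
proof (induction d arbitrary: m m')
  case 0
  then have "m' = 0" using deg_zero by blast
  then have "cnt m = (\<lambda>j v. 0)" using 0 by (simp add: fun_eq_iff)
  then have "m = 0" by (rule cnt_zero_imp)
  then show ?case using \<open>m' = 0\<close> ideal_in_0 unfolding I2_def by simp
next
  case (Suc d)
  have "m' \<noteq> 0" using Suc.prems(1) unfolding deg_def by auto
  then obtain p where p: "p \<in> Poly_Mapping.keys m'" by fastforce
  define m0 where "m0 = m' - Poly_Mapping.single p 1"
  have m'eq: "Poly_Mapping.single p 1 + m0 = m'" unfolding m0_def using decompose1[OF p] by metis
  have dm0: "deg m0 = d" using Suc.prems(1) deg_add[of "Poly_Mapping.single p 1" m0] deg_single[of p]
    unfolding m'eq by simp
  have km0: "Poly_Mapping.keys m0 \<subseteq> box n r" using Suc.prems(3) keys_minus_nat[of m' "Poly_Mapping.single p 1"] unfolding m0_def by blast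
  have pb: "p \<in> box n r" using Suc.prems(3) p by blast
  have cpos: "\<forall>j. 1 \<le> j \<and> j \<le> n \<longrightarrow> cnt m j (p j) > 0" using cnt_pos[OF p] Suc.prems(4) by simp
  have "cnt m 0 (p 0) > 0" using cnt_pos[OF p] Suc.prems(4) by simp
  then have "m \<noteq> 0" by auto
  from align[OF Suc.prems(2) this pb cpos] obtain m'' where
    A: "Poly_Mapping.keys m'' \<subseteq> box n r" "(Xm m - Xm (Poly_Mapping.single p 1 + m'') :: 'k mpoly) \<in> I2 n r"
       "cnt (Poly_Mapping.single p 1 + m'') = cnt m" by blast
  have "cnt m'' = cnt m0"
  proof (intro ext)
    fix j v
    have "cnt (Poly_Mapping.single p 1 + m'') j v = cnt (Poly_Mapping.single p 1 + m0) j v"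
      using A(3) Suc.prems(4) m'eq by simp
    then show "cnt m'' j v = cnt m0 j v" by simp
  qed
  from Suc.IH[OF dm0 A(1) km0 this] have "(Xm m'' - Xm m0 :: 'k mpoly) \<in> I2 n r" .
  from eqv_cong[OF this, of "Poly_Mapping.single p 1"] pb
  have "(Xm (Poly_Mapping.single p 1 + m'') - Xm (Poly_Mapping.single p 1 + m0) :: 'k mpoly) \<in> I2 n r" by simp
  from eqv_trans[OF A(2) this] show ?case unfolding m'eq .
qed

lemma I2_sub: "(I2 n r :: 'k::comm_ring_1 mpoly set) \<subseteq> ideal_in (polyring (box n r)) (minors2 n (box n r) \<union> T)"
  unfolding I2_def by (rule ideal_in_mono_gen[OF subR]) blast

lemma killed:
  assumes m: "Poly_Mapping.keys m \<subseteq> box n r" and L: "L \<subseteq> {1..n}" "L \<noteq> {}"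
    and c: "\<forall>l\<in>L. cnt m l (r l) > 0" and rpos: "\<forall>j. 1 \<le> j \<and> j \<le> n \<longrightarrow> r j > 0"
  shows "(Xm m :: 'k::comm_ring_1 mpoly) \<in> ideal_in (polyring (box n r)) (minors2 n (box n r) \<union> X ` (\<Inter>l\<in>L. boxB n r l))"
    (is "_ \<in> ?J")
proof -
  from L(2) obtain l0 where l0: "l0 \<in> L" by blast
  with c have "cnt m l0 (r l0) > 0" by blast
  then obtain q where q: "q \<in> Poly_Mapping.keys m" "q l0 = r l0" by (rule cnt_pos_obtain)
  have qb: "q \<in> box n r" using m q by blast
  define p where "p = (\<lambda>j. if j \<in> L then r j else q j)"
  have pb: "p \<in> box n r"
    using qb L(1) rpos unfolding box_def p_def by (auto simp: Suc_le_eq)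
  have pB: "p \<in> (\<Inter>l\<in>L. boxB n r l)" using pb unfolding boxB_def p_def by auto
  have cpos: "\<forall>j. 1 \<le> j \<and> j \<le> n \<longrightarrow> cnt m j (p j) > 0"
    using c cnt_pos[OF q(1)] unfolding p_def by auto
  have "m \<noteq> 0" using q by auto
  from align[OF m this pb cpos] obtain m'' where
    A: "Poly_Mapping.keys m'' \<subseteq> box n r" "(Xm m - Xm (Poly_Mapping.single p 1 + m'') :: 'k mpoly) \<in> I2 n r"
    by blast
  have 1: "(Xm m - Xm (Poly_Mapping.single p 1 + m'') :: 'k mpoly) \<in> ?J" using A(2) I2_sub by blast
  have "(Xm m'' * X p :: 'k mpoly) \<in> ?J"
    by (rule ideal_in_gen_mult[OF Xm_in[OF A(1)]]) (use pB in blast)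
  then have 2: "(Xm (Poly_Mapping.single p 1 + m'') :: 'k mpoly) \<in> ?J"
    by (simp add: Xm_add X_Xm mult.commute)
  have "(Xm m - Xm (Poly_Mapping.single p 1 + m'')) + Xm (Poly_Mapping.single p 1 + m'') \<in> ?J"
    by (rule ideal_in_add[OF subR 1 2])
  then show ?thesis by simp
qed

end

lemma R_mult: "a \<in> polyring P \<Longrightarrow> b \<in> polyring P \<Longrightarrow> (a * b :: 'k::comm_ring_1 mpoly) \<in> polyring P"
  using subring_polyring[of P] unfolding subring_def by blast

lemma R_diff: "a \<in> polyring P \<Longrightarrow> b \<in> polyring P \<Longrightarrow> (a - b :: 'k::comm_ring_1 mpoly) \<in> polyring P"
proof -
  assume a: "a \<in> polyring P" and b: "b \<in> polyring P"
  have "- b \<in> polyring P" using subring_polyring[of P] b unfolding subring_def by blast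
  then have "a + - b \<in> polyring P" using subring_polyring[of P] a unfolding subring_def by blast
  then show ?thesis by simp
qed

context
  fixes n :: nat and r :: "nat \<Rightarrow> nat"
begin

lemma minors_in_R:
  assumes "P \<subseteq> box n r"
  shows "(minors2 n P :: 'k::comm_ring_1 mpoly set) \<subseteq> polyring (box n r)"
proof
  fix s :: "'k mpoly" assume "s \<in> minors2 n P"
  then obtain k p q where s: "s = minor2 k p q" "1 \<le> k" "k \<le> n" "p \<in> P" "q \<in> P"
    unfolding minors2_def by blast
  have pq: "p \<in> box n r" "q \<in> box n r" using s(4,5) assms by auto
  have "X p * X q \<in> (polyring (box n r) :: 'k mpoly set)"
    by (rule R_mult[OF X_in_polyring[OF pq(1)] X_in_polyring[OF pq(2)]])
  moreover have "X (p(k := q k)) * X (q(k := p k)) \<in> (polyring (box n r) :: 'k mpoly set)"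
    by (rule R_mult[OF X_in_polyring[OF box_upd[OF pq s(2,3)]] X_in_polyring[OF box_upd[OF pq(2,1) s(2,3)]]])
  ultimately show "s \<in> polyring (box n r)"
    unfolding s(1) minor2_def by (rule R_diff)
qed

lemma Iface_sub_R: "(Iface n r l :: 'k::comm_ring_1 mpoly set) \<subseteq> polyring (box n r)"
  unfolding Iface_def
proof (rule ideal_in_subset[OF subR])
  have "(minors2 n (boxA n r l) :: 'k mpoly set) \<subseteq> polyring (box n r)"
    by (rule minors_in_R) (auto simp: boxA_def)
  moreover have "(X ` boxB n r l :: 'k mpoly set) \<subseteq> polyring (box n r)"
  proof
    fix x assume "x \<in> (X ` boxB n r l :: 'k mpoly set)"
    then obtain p where "x = X p" "p \<in> box n r" unfolding boxB_def by blast
    then show "x \<in> polyring (box n r)" using X_in_polyring[of p "box n r"] by simp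
  qed
  ultimately show "(minors2 n (boxA n r l) \<union> X ` boxB n r l :: 'k mpoly set) \<subseteq> polyring (box n r)"
    by (rule Un_least)
qed

lemma phi_Iface:
  assumes "(f :: 'k::comm_ring_1 mpoly) \<in> Iface n r l" "c l (r l) = 0"
  shows "phi c f = 0"
proof (rule phi_ideal[OF _ assms(1)[unfolded Iface_def]])
  fix g s :: "'k mpoly"
  assume "s \<in> minors2 n (boxA n r l) \<union> X ` boxB n r l"
  then show "phi c (g * s) = 0"
  proof
    assume "s \<in> minors2 n (boxA n r l)"
    then obtain k p q where "s = minor2 k p q" unfolding minors2_def by blast
    then show ?thesis by (simp add: phi_minor)
  next
    assume "s \<in> X ` boxB n r l"
    then obtain p where "s = X p" "p l = r l" unfolding boxB_def by blast
    then show ?thesis using phi_X[of p l "r l" c g] assms(2) by simp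
  qed
qed

lemma XX_in_Iface:
  assumes "p \<in> box n r" "q \<in> box n r" "p l = r l \<or> q l = r l"
  shows "(X p * X q :: 'k::comm_ring_1 mpoly) \<in> Iface n r l"
  using assms(3)
proof
  assume "p l = r l"
  then have "p \<in> boxB n r l" using assms(1) unfolding boxB_def by blast
  then have "(X q * X p :: 'k mpoly) \<in> Iface n r l" unfolding Iface_def
    by (intro ideal_in_gen_mult X_in_polyring assms(2)) blast
  then show ?thesis by (simp add: mult.commute)
next
  assume "q l = r l"
  then have "q \<in> boxB n r l" using assms(2) unfolding boxB_def by blast
  then show ?thesis unfolding Iface_def
    by (intro ideal_in_gen_mult X_in_polyring assms(1)) blast
qed

lemma minor_in_Iface:
  assumes pq: "p \<in> box n r" "q \<in> box n r" and k: "1 \<le> k" "k \<le> n" and l: "1 \<le> l" "l \<le> n"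
  shows "(minor2 k p q :: 'k::comm_ring_1 mpoly) \<in> Iface n r l"
proof -
  have ple: "p l \<le> r l" "q l \<le> r l" using pq l unfolding box_def by auto
  show ?thesis
  proof (cases "p l < r l \<and> q l < r l")
    case True
    then have "p \<in> boxA n r l" "q \<in> boxA n r l" using pq unfolding boxA_def by auto
    then have "(minor2 k p q :: 'k mpoly) \<in> minors2 n (boxA n r l)" unfolding minors2_def using k by blast
    then show ?thesis unfolding Iface_def by (intro ideal_in_gen[OF subR]) blast
  next
    case False
    then have F: "p l = r l \<or> q l = r l" using ple by auto
    have 1: "(X p * X q :: 'k mpoly) \<in> Iface n r l" by (rule XX_in_Iface[OF pq F])
    have F2: "(p(k := q k)) l = r l \<or> (q(k := p k)) l = r l"
      using F by (cases "k = l") auto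
    have 2: "(X (p(k := q k)) * X (q(k := p k)) :: 'k mpoly) \<in> Iface n r l"
      by (rule XX_in_Iface[OF box_upd[OF pq k] box_upd[OF pq(2,1) k] F2])
    show ?thesis unfolding minor2_def Iface_def
      by (rule ideal_in_diff[OF subR]) (use 1 2 in \<open>simp_all add: Iface_def\<close>)
  qed
qed

end

lemma single0_sum: "(\<Sum>m\<in>A. Poly_Mapping.single 0 (g m)) = (Poly_Mapping.single 0 (\<Sum>m\<in>A. g m) :: 'k::comm_ring_1 mpoly)"
proof (induction A rule: infinite_finite_induct)
  case (infinite A) then show ?case by simp
next
  case empty then show ?case by simp
next
  case (insert x F) then show ?case by (simp add: single_add)
qed

lemma single_as_mult: "Poly_Mapping.single m a = (Poly_Mapping.single 0 a * Xm m :: 'k::comm_ring_1 mpoly)"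
  unfolding Xm_def by (simp add: mult_single)

context
  fixes n :: nat and r :: "nat \<Rightarrow> nat"
begin

lemma main_L:
  assumes L: "L \<subseteq> {1..n}" "L \<noteq> {}" and rpos: "\<forall>j. 1 \<le> j \<and> j \<le> n \<longrightarrow> r j > 0"
  shows "(\<Inter>l\<in>L. Iface n r l :: 'k::comm_ring_1 mpoly set)
         = ideal_in (polyring (box n r)) (minors2 n (box n r) \<union> X ` (\<Inter>l\<in>L. boxB n r l))"
    (is "?I = ?J")
proof
  show "?J \<subseteq> ?I"
  proof (rule INT_greatest)
    fix l assume l: "l \<in> L"
    then have l1: "1 \<le> l" "l \<le> n" using L(1) by auto
    have gens: "(minors2 n (box n r) \<union> X ` (\<Inter>l\<in>L. boxB n r l) :: 'k mpoly set) \<subseteq> Iface n r l"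
    proof
      fix s :: "'k mpoly"
      assume "s \<in> minors2 n (box n r) \<union> X ` (\<Inter>l\<in>L. boxB n r l)"
      then show "s \<in> Iface n r l"
      proof
        assume "s \<in> minors2 n (box n r)"
        then obtain k p q where s: "s = minor2 k p q" "1 \<le> k" "k \<le> n" "p \<in> box n r" "q \<in> box n r"
          unfolding minors2_def by blast
        show ?thesis unfolding s(1) by (rule minor_in_Iface[OF s(4,5,2,3) l1])
      next
        assume "s \<in> X ` (\<Inter>l\<in>L. boxB n r l)"
        then obtain p where p: "s = X p" "p \<in> (\<Inter>l\<in>L. boxB n r l)" by blast
        then have "p \<in> boxB n r l" using l by blast
        then show ?thesis unfolding p(1) Iface_def by (intro ideal_in_gen[OF subR]) blast
      qed
    qed
    show "?J \<subseteq> Iface n r l"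
      using ideal_in_mono[OF subR gens[unfolded Iface_def]] unfolding Iface_def .
  qed
next
  show "?I \<subseteq> ?J"
  proof
    fix f :: "'k mpoly"
    assume f: "f \<in> ?I"
    from L(2) obtain l0 where l0: "l0 \<in> L" by blast
    have "f \<in> Iface n r l0" using f l0 by blast
    then have "f \<in> polyring (box n r)" using Iface_sub_R by blast
    then have fR: "\<And>m. m \<in> Poly_Mapping.keys f \<Longrightarrow> Poly_Mapping.keys m \<subseteq> box n r"
      unfolding polyring_def by blast
    have phiz: "phi c f = 0" if "l \<in> L" "c l (r l) = 0" for c l
      using phi_Iface[where f=f and l=l and c=c and n=n and r=r] f that by blast
    define K where "K = Poly_Mapping.keys f"
    define alive where "alive m \<longleftrightarrow> (\<exists>l\<in>L. cnt m l (r l) = 0)" for m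
    define K1 where "K1 = {m\<in>K. \<not> alive m}"
    define K2 where "K2 = {m\<in>K. alive m}"
    define cm where "cm m = (Poly_Mapping.single 0 (Poly_Mapping.lookup f m) :: 'k mpoly)" for m
    have finK: "finite K" unfolding K_def by simp
    have fin12: "finite K1" "finite K2" using finK unfolding K1_def K2_def by auto
    have cmR: "cm m \<in> polyring (box n r)" for m unfolding cm_def by (rule const_in_polyring)
    have fsum: "f = (\<Sum>m\<in>K. cm m * Xm m)"
      unfolding cm_def K_def single_as_mult[symmetric] by (rule poly_expand)
    have KU: "K = K1 \<union> K2" "K1 \<inter> K2 = {}" unfolding K1_def K2_def by auto
    have fsplit: "f = (\<Sum>m\<in>K1. cm m * Xm m) + (\<Sum>m\<in>K2. cm m * Xm m)"
      unfolding fsum KU(1) by (rule sum.union_disjoint[OF fin12 KU(2)])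
    have T1: "(\<Sum>m\<in>K1. cm m * Xm m) \<in> ?J"
    proof (rule ideal_in_sum[OF subR], intro ballI)
      fix m assume m: "m \<in> K1"
      then have mk: "Poly_Mapping.keys m \<subseteq> box n r" using fR unfolding K1_def K_def by blast
      have "\<forall>l\<in>L. cnt m l (r l) > 0" using m unfolding K1_def alive_def by auto
      from killed[OF mk L this rpos] have "(Xm m :: 'k mpoly) \<in> ?J" .
      then show "cm m * Xm m \<in> ?J" by (rule ideal_in_mult[OF subR cmR])
    qed
    define rho where "rho c = (SOME m. m \<in> K2 \<and> cnt m = c)" for c
    have rho: "rho (cnt m) \<in> K2 \<and> cnt (rho (cnt m)) = cnt m" if "m \<in> K2" for m
      unfolding rho_def by (rule someI[of _ m]) (use that in blast)
    have T2: "(\<Sum>m\<in>K2. cm m * (Xm m - Xm (rho (cnt m)))) \<in> ?J"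
    proof (rule ideal_in_sum[OF subR], intro ballI)
      fix m assume m: "m \<in> K2"
      then have mk: "Poly_Mapping.keys m \<subseteq> box n r" using fR unfolding K2_def K_def by blast
      have r1: "rho (cnt m) \<in> K2" "cnt (rho (cnt m)) = cnt m" using rho[OF m] by auto
      have rk: "Poly_Mapping.keys (rho (cnt m)) \<subseteq> box n r" using fR r1(1) unfolding K2_def K_def by blast
      have "(Xm m - Xm (rho (cnt m)) :: 'k mpoly) \<in> I2 n r"
        by (rule connect[OF refl mk rk r1(2)[symmetric]])
      then have "(Xm m - Xm (rho (cnt m)) :: 'k mpoly) \<in> ?J" using I2_sub by blast
      then show "cm m * (Xm m - Xm (rho (cnt m))) \<in> ?J" by (rule ideal_in_mult[OF subR cmR])
    qed
    have T3: "(\<Sum>m\<in>K2. cm m * Xm (rho (cnt m))) = 0"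
    proof -
      have "(\<Sum>m\<in>K2. cm m * Xm (rho (cnt m))) = (\<Sum>c\<in>cnt ` K2. \<Sum>m\<in>{x\<in>K2. cnt x = c}. cm m * Xm (rho (cnt m)))"
        by (rule sum.group[symmetric]) (use fin12 in auto)
      also have "\<dots> = (\<Sum>c\<in>cnt ` K2. 0)"
      proof (rule sum.cong[OF refl])
        fix c assume c: "c \<in> cnt ` K2"
        then obtain m0 where m0: "m0 \<in> K2" "c = cnt m0" by blast
        have al: "\<exists>l\<in>L. c l (r l) = 0" using m0 unfolding K2_def alive_def by auto
        then obtain l where "l \<in> L" "c l (r l) = 0" by blast
        then have p0: "phi c f = 0" by (rule phiz)
        have "phi c f = (\<Sum>m\<in>K. if cnt m = c then Poly_Mapping.lookup f m else 0)"
          unfolding phi_def K_def ..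
        also have "\<dots> = (\<Sum>m\<in>{x\<in>K. cnt x = c}. Poly_Mapping.lookup f m)"
          by (rule sum.inter_filter[symmetric, OF finK])
        also have "{x\<in>K. cnt x = c} = {x\<in>K2. cnt x = c}"
          using al unfolding K2_def alive_def by auto
        finally have s0: "(\<Sum>m\<in>{x\<in>K2. cnt x = c}. Poly_Mapping.lookup f m) = 0" using p0 by simp
        have "(\<Sum>m\<in>{x\<in>K2. cnt x = c}. cm m * Xm (rho (cnt m))) = (\<Sum>m\<in>{x\<in>K2. cnt x = c}. cm m * Xm (rho c))"
          by (rule sum.cong) auto
        also have "\<dots> = (\<Sum>m\<in>{x\<in>K2. cnt x = c}. cm m) * Xm (rho c)"
          by (rule sum_distrib_right[symmetric])
        also have "\<dots> = 0" unfolding cm_def single0_sum s0 by simp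
        finally show "(\<Sum>m\<in>{x\<in>K2. cnt x = c}. cm m * Xm (rho (cnt m))) = 0" .
      qed
      finally show ?thesis by simp
    qed
    have "(\<Sum>m\<in>K2. cm m * Xm m) = (\<Sum>m\<in>K2. cm m * (Xm m - Xm (rho (cnt m)))) + (\<Sum>m\<in>K2. cm m * Xm (rho (cnt m)))"
      by (simp add: sum.distrib[symmetric] algebra_simps)
    then have "(\<Sum>m\<in>K2. cm m * Xm m) \<in> ?J" using T2 T3 by simp
    then show "f \<in> ?J" unfolding fsplit by (rule ideal_in_add[OF subR T1])
  qed
qed

end

theorem lemma1p1:
  fixes n :: nat and r :: "nat \<Rightarrow> nat"
  assumes "n \<ge> 2"
    and "\<And>j. 1 \<le> j \<Longrightarrow> j \<le> n \<Longrightarrow> r j > 0"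
  shows "(\<forall>l s. l \<in> {1..n} \<longrightarrow> s \<in> {1..n} \<longrightarrow> l \<noteq> s \<longrightarrow>
            (Iface n r l \<inter> Iface n r s :: 'k::field mpoly set)
              = ideal_in (polyring (box n r))
                  (minors2 n (box n r) \<union> X ` (boxB n r l \<inter> boxB n r s)))
       \<and> (\<forall>L. L \<subseteq> {1..n} \<longrightarrow> 2 \<le> card L \<longrightarrow>
            (\<Inter>l\<in>L. Iface n r l :: 'k::field mpoly set)
              = ideal_in (polyring (box n r))
                  (minors2 n (box n r) \<union> X ` (\<Inter>l\<in>L. boxB n r l)))"
proof (intro conjI allI impI)
  have rpos: "\<forall>j. 1 \<le> j \<and> j \<le> n \<longrightarrow> r j > 0" using assms(2) by blast
  fix l s assume ls: "l \<in> {1..n}" "s \<in> {1..n}" "l \<noteq> s"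
  have "{l, s} \<subseteq> {1..n}" "{l, s} \<noteq> {}" using ls by auto
  from main_L[OF this rpos] show "(Iface n r l \<inter> Iface n r s :: 'k::field mpoly set)
              = ideal_in (polyring (box n r))
                  (minors2 n (box n r) \<union> X ` (boxB n r l \<inter> boxB n r s))" by simp
next
  have rpos: "\<forall>j. 1 \<le> j \<and> j \<le> n \<longrightarrow> r j > 0" using assms(2) by blast
  fix L :: "nat set" assume L: "L \<subseteq> {1..n}" "2 \<le> card L"
  then have "L \<noteq> {}" by auto
  from main_L[OF L(1) this rpos] show "(\<Inter>l\<in>L. Iface n r l :: 'k::field mpoly set)
              = ideal_in (polyring (box n r))
                  (minors2 n (box n r) \<union> X ` (\<Inter>l\<in>L. boxB n r l))" .
qed


end
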